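(* Let $k\ge1$, $G=(V,E)$ an inductively $k$-independent graph with $k$-independence ordering $v_1,\dots,v_n$, $f:2^V\to\mathbb{R}_{\ge0}$ monotone submodular with $f(\emptyset)=0$, and $\beta>0$. The algorithm PREEMPTIVE-GREEDY (described in the context) with parameter $\beta$ returns an independent set $S_{\mathrm{out}}$ of $G$ such that for every independent set $T$ of $G$, \[ f(T)\le\big(k(1+\beta)+1\big)\big(1+\beta^{-1}\big)\,f(S_{\mathrm{out}}). \]
   Context: $N(v)$ is the neighbourhood of $v$ (excluding $v$); $G$ is inductively $k$-independent with $k$-independence ordering $v_1,\dots,v_n$ if for every $i$, $G[N(v_i)\cap\{v_i,\dots,v_n\}]$ has no independent set of size more than $k$. Order $V$ by $v_1<v_2<\dots<v_n$. For $S\subseteq V$ and $v\in V$, $f_S(v)=f(S\cup\{v\})-f(S)$, and the incremental value of $u$ in $S$ is $\nu_f(S,u)=f_{S'}(u)$ where $S'=\{s\in S:s<u\}$. Algorithm PREEMPTIVE-GREEDY (parameter $\beta>0$): start with $S=\emptyset$; for $i=1,\dots,n$: let $C_i=N(v_i)\cap S$; if $f_S(v_i)\ge(1+\beta)\sum_{u\in C_i}\nu_f(S,u)$, replace $S$ by $(S\setminus C_i)\cup\{v_i\}$. Return the final $S$ as $S_{\mathrm{out}}$. *)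

theory Defs
  imports Complex_Main
begin

definition simple_graph :: "'a set \<Rightarrow> ('a \<Rightarrow> 'a \<Rightarrow> bool) \<Rightarrow> bool" where
  "simple_graph V E \<longleftrightarrow> finite V \<and> (\<forall>u v. E u v \<longrightarrow> u \<in> V \<and> v \<in> V) \<and>
     (\<forall>u v. E u v \<longrightarrow> E v u) \<and> (\<forall>v. \<not> E v v)"

definition nbr :: "('a \<Rightarrow> 'a \<Rightarrow> bool) \<Rightarrow> 'a \<Rightarrow> 'a set" where
  "nbr E v = {u. E v u \<and> u \<noteq> v}"

definition independent :: "('a \<Rightarrow> 'a \<Rightarrow> bool) \<Rightarrow> 'a set \<Rightarrow> bool" where
  "independent E A \<longleftrightarrow> (\<forall>x\<in>A. \<forall>y\<in>A. \<not> E x y)"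

definition independent_set :: "'a set \<Rightarrow> ('a \<Rightarrow> 'a \<Rightarrow> bool) \<Rightarrow> 'a set \<Rightarrow> bool" where
  "independent_set V E A \<longleftrightarrow> A \<subseteq> V \<and> independent E A"

definition k_independence_ordering ::
  "nat \<Rightarrow> 'a set \<Rightarrow> ('a \<Rightarrow> 'a \<Rightarrow> bool) \<Rightarrow> 'a list \<Rightarrow> bool" where
  "k_independence_ordering k V E vs \<longleftrightarrow> distinct vs \<and> set vs = V \<and>
     (\<forall>i < length vs. \<forall>I. I \<subseteq> nbr E (vs ! i) \<inter> set (drop i vs) \<and> independent E I
         \<longrightarrow> card I \<le> k)"

definition inductively_k_independent :: "nat \<Rightarrow> 'a set \<Rightarrow> ('a \<Rightarrow> 'a \<Rightarrow> bool) \<Rightarrow> bool" where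
  "inductively_k_independent k V E \<longleftrightarrow> (\<exists>vs. k_independence_ordering k V E vs)"

definition monotone_submodular :: "'a set \<Rightarrow> ('a set \<Rightarrow> real) \<Rightarrow> bool" where
  "monotone_submodular V f \<longleftrightarrow>
     (\<forall>A. A \<subseteq> V \<longrightarrow> f A \<ge> 0) \<and>
     (\<forall>A B. A \<subseteq> B \<and> B \<subseteq> V \<longrightarrow> f A \<le> f B) \<and>
     (\<forall>A B. A \<subseteq> V \<and> B \<subseteq> V \<longrightarrow> f (A \<union> B) + f (A \<inter> B) \<le> f A + f B)"

definition marginal :: "('a set \<Rightarrow> real) \<Rightarrow> 'a set \<Rightarrow> 'a \<Rightarrow> real" where
  "marginal f S v = f (S \<union> {v}) - f S"

definition before :: "'a list \<Rightarrow> 'a \<Rightarrow> 'a \<Rightarrow> bool" where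
  "before vs s u \<longleftrightarrow> (\<exists>i j. i < j \<and> j < length vs \<and> vs ! i = s \<and> vs ! j = u)"

definition incr_value :: "'a list \<Rightarrow> ('a set \<Rightarrow> real) \<Rightarrow> 'a set \<Rightarrow> 'a \<Rightarrow> real" where
  "incr_value vs f S u = marginal f {s \<in> S. before vs s u} u"

definition pg_step :: "'a list \<Rightarrow> ('a \<Rightarrow> 'a \<Rightarrow> bool) \<Rightarrow> ('a set \<Rightarrow> real) \<Rightarrow> real
    \<Rightarrow> 'a set \<Rightarrow> 'a \<Rightarrow> 'a set" where
  "pg_step vs E f \<beta> S v =
     (let C = nbr E v \<inter> S in
      if marginal f S v \<ge> (1 + \<beta>) * (\<Sum>u\<in>C. incr_value vs f S u)
      then (S - C) \<union> {v} else S)"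

definition preemptive_greedy :: "'a list \<Rightarrow> ('a \<Rightarrow> 'a \<Rightarrow> bool) \<Rightarrow> ('a set \<Rightarrow> real) \<Rightarrow> real \<Rightarrow> 'a set" where
  "preemptive_greedy vs E f \<beta> = foldl (pg_step vs E f \<beta>) {} vs"

end

theory Submission
  imports Defs
begin


locale PG =
  fixes V :: "'a set" and E :: "'a \<Rightarrow> 'a \<Rightarrow> bool" and vs :: "'a list"
    and f :: "'a set \<Rightarrow> real" and k :: nat and \<beta> :: real
  assumes graph: "simple_graph V E"
    and ord: "k_independence_ordering k V E vs"
    and ms: "monotone_submodular V f"
    and f0: "f {} = 0"
    and bpos: "\<beta> > 0"
begin

abbreviation "n \<equiv> length vs"

lemma dist: "distinct vs" and setvs: "set vs = V"
  using ord by (auto simp: k_independence_ordering_def)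

lemma finV: "finite V" using graph by (simp add: simple_graph_def)

lemma fmono: "A \<subseteq> B \<Longrightarrow> B \<subseteq> V \<Longrightarrow> f A \<le> f B"
  using ms by (auto simp: monotone_submodular_def)

lemma fsub: "A \<subseteq> V \<Longrightarrow> B \<subseteq> V \<Longrightarrow> f (A \<union> B) + f (A \<inter> B) \<le> f A + f B"
  using ms by (auto simp: monotone_submodular_def)

lemma marg_nonneg: "X \<union> {v} \<subseteq> V \<Longrightarrow> marginal f X v \<ge> 0"
  unfolding marginal_def using fmono[of X "X \<union> {v}"] by auto

lemma marg_anti: assumes "X \<subseteq> Y" "Y \<union> {v} \<subseteq> V"
  shows "marginal f Y v \<le> marginal f X v"
proof -
  have "f ((X \<union> {v}) \<union> Y) + f ((X \<union> {v}) \<inter> Y) \<le> f (X \<union> {v}) + f Y"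
    using assms by (intro fsub) auto
  moreover have "(X \<union> {v}) \<union> Y = Y \<union> {v}" using assms by auto
  moreover have "f X \<le> f ((X \<union> {v}) \<inter> Y)" using assms by (intro fmono) auto
  ultimately have "f (Y \<union> {v}) + f ((X \<union> {v}) \<inter> Y) \<le> f (X \<union> {v}) + f Y" by simp
  then show ?thesis using \<open>f X \<le> _\<close> unfolding marginal_def by linarith
qed

lemma before_nth: "i < n \<Longrightarrow> j < n \<Longrightarrow> before vs (vs ! i) (vs ! j) \<longleftrightarrow> i < j"
  unfolding before_def using dist by (auto simp: nth_eq_iff_index_eq)

definition idx :: "'a \<Rightarrow> nat" where "idx u = (LEAST i. vs ! i = u)"

lemma idx_nth: "j < n \<Longrightarrow> idx (vs ! j) = j"
  unfolding idx_def
proof (rule Least_equality)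
  fix i assume j: "j < n" and "vs ! i = vs ! j"
  then show "j \<le> i" using dist by (cases "i < n") (auto simp: nth_eq_iff_index_eq)
qed auto

lemma idx_props: "u \<in> V \<Longrightarrow> idx u < n \<and> vs ! idx u = u"
  using setvs idx_nth by (auto simp: in_set_conv_nth)

lemma in_take: "p < n \<Longrightarrow> vs ! p \<in> set (take t vs) \<longleftrightarrow> p < t"
  using dist by (auto simp: in_set_conv_nth nth_eq_iff_index_eq)

definition S :: "nat \<Rightarrow> 'a set" where
  "S t = foldl (pg_step vs E f \<beta>) {} (take t vs)"

lemma S0: "S 0 = {}" by (simp add: S_def)

lemma S_Suc: "t < n \<Longrightarrow> S (Suc t) = pg_step vs E f \<beta> (S t) (vs ! t)"
  by (simp add: S_def take_Suc_conv_app_nth)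

lemma Sn: "S n = preemptive_greedy vs E f \<beta>"
  by (simp add: S_def preemptive_greedy_def)

lemma S_Suc_sub: "t < n \<Longrightarrow> S (Suc t) \<subseteq> S t \<union> {vs ! t}"
  by (auto simp: S_Suc pg_step_def Let_def)

lemma S_sub_take: "S t \<subseteq> set (take t vs)"
proof (induction t)
  case 0 then show ?case by (simp add: S0)
next
  case (Suc t)
  show ?case
  proof (cases "t < n")
    case True
    then have "set (take (Suc t) vs) = set (take t vs) \<union> {vs ! t}"
      by (simp add: take_Suc_conv_app_nth)
    then show ?thesis using S_Suc_sub[OF True] Suc by auto
  next
    case False
    then have "S (Suc t) = S t" by (simp add: S_def)
    then show ?thesis using Suc False by simp
  qed
qed

lemma S_V: "S t \<subseteq> V" using S_sub_take setvs by (meson order_trans set_take_subset)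

lemma finS: "finite (S t)" using S_V finV finite_subset by blast

lemma S_idx: "u \<in> S t \<Longrightarrow> idx u < t"
  using S_sub_take S_V idx_props in_take by (metis subsetD)

lemma persist: assumes "s \<in> S t'" "idx s < t" "t \<le> t'" "t' \<le> n" shows "s \<in> S t"
  using assms
proof (induction t' arbitrary: t)
  case 0 then show ?case by simp
next
  case (Suc m)
  show ?case
  proof (cases "t = Suc m")
    case True then show ?thesis using Suc by simp
  next
    case False
    have "m < n" using Suc by simp
    have "s \<in> V" using Suc.prems S_V by blast
    have "vs ! m \<noteq> s" using idx_props[OF \<open>s \<in> V\<close>] idx_nth[OF \<open>m < n\<close>] Suc.prems False by force
    then have "s \<in> S m" using S_Suc_sub[OF \<open>m < n\<close>] Suc.prems by auto
    then show ?thesis using Suc False by auto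
  qed
qed

end


context PG
begin

lemma tele_aux: assumes "X \<subseteq> V" "i \<le> n"
  shows "f (X \<inter> set (take i vs)) = (\<Sum>u\<in>X \<inter> set (take i vs). incr_value vs f X u)"
  using assms(2)
proof (induction i)
  case 0 then show ?case by (simp add: f0)
next
  case (Suc i)
  then have i: "i < n" by simp
  have tk: "set (take (Suc i) vs) = insert (vs ! i) (set (take i vs))"
    using i by (simp add: take_Suc_conv_app_nth)
  show ?case
  proof (cases "vs ! i \<in> X")
    case False
    then have "X \<inter> set (take (Suc i) vs) = X \<inter> set (take i vs)" using tk by auto
    then show ?thesis using Suc by simp
  next
    case True
    let ?P = "X \<inter> set (take i vs)"
    have eq: "X \<inter> set (take (Suc i) vs) = insert (vs ! i) ?P" using tk True by auto
    have nin: "vs ! i \<notin> ?P" using in_take[OF i] by auto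
    have fin: "finite ?P" by simp
    have pre: "{s \<in> X. before vs s (vs ! i)} = ?P"
    proof -
      { fix s assume s: "s \<in> X"
        then have sV: "s \<in> V" using assms by auto
        obtain p where p: "p < n" "vs ! p = s" using idx_props[OF sV] by blast
        have "before vs s (vs ! i) \<longleftrightarrow> s \<in> set (take i vs)"
          using before_nth[OF p(1) i] in_take[OF p(1)] p by simp }
      then show ?thesis by auto
    qed
    have "f (insert (vs ! i) ?P) = f ?P + incr_value vs f X (vs ! i)"
      unfolding incr_value_def marginal_def pre by simp
    then show ?thesis using eq Suc nin fin by simp
  qed
qed

lemma tele: assumes "X \<subseteq> V" shows "f X = (\<Sum>u\<in>X. incr_value vs f X u)"
proof -
  have "X \<inter> set (take n vs) = X" using assms setvs by auto
  then show ?thesis using tele_aux[OF assms, of n] by simp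
qed

lemma incr_nonneg: "X \<subseteq> V \<Longrightarrow> u \<in> V \<Longrightarrow> incr_value vs f X u \<ge> 0"
  unfolding incr_value_def by (rule marg_nonneg) auto

lemma incr_anti: "X \<subseteq> Y \<Longrightarrow> Y \<subseteq> V \<Longrightarrow> u \<in> V \<Longrightarrow> incr_value vs f Y u \<le> incr_value vs f X u"
  unfolding incr_value_def by (rule marg_anti) auto

lemma remove_bound: assumes "C \<subseteq> X" "X \<subseteq> V"
  shows "f X - f (X - C) \<le> (\<Sum>u\<in>C. incr_value vs f X u)"
proof -
  have finX: "finite X" using assms finV finite_subset by blast
  have "f (X - C) = (\<Sum>u\<in>X - C. incr_value vs f (X - C) u)" using assms by (intro tele) auto
  also have "\<dots> \<ge> (\<Sum>u\<in>X - C. incr_value vs f X u)"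
    using assms by (intro sum_mono incr_anti) auto
  finally have a: "f (X - C) \<ge> (\<Sum>u\<in>X - C. incr_value vs f X u)" .
  have "f X = (\<Sum>u\<in>X. incr_value vs f X u)" using tele assms by blast
  also have "\<dots> = (\<Sum>u\<in>X - C. incr_value vs f X u) + (\<Sum>u\<in>C. incr_value vs f X u)"
    using sum.subset_diff[OF assms(1) finX] by simp
  finally show ?thesis using a by linarith
qed

lemma union_bound: assumes "finite B" "A \<union> B \<subseteq> V"
  shows "f (A \<union> B) \<le> f A + (\<Sum>b\<in>B. marginal f A b)"
  using assms
proof (induction B rule: finite_induct)
  case empty then show ?case by simp
next
  case (insert b B)
  have "f (A \<union> insert b B) = f (A \<union> B) + marginal f (A \<union> B) b"
    unfolding marginal_def by (simp add: insert_commute)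
  also have "marginal f (A \<union> B) b \<le> marginal f A b"
    using insert.prems by (intro marg_anti) auto
  finally show ?case using insert by auto
qed

end


context PG
begin

definition Q :: "'a \<Rightarrow> 'a set" where
  "Q u = {s. before vs s u \<and> (\<forall>t\<le>n. u \<in> S t \<longrightarrow> s \<in> S t)}"
definition phi :: "'a \<Rightarrow> real" where "phi u = marginal f (Q u) u"
definition Am :: "nat \<Rightarrow> 'a set" where "Am m = {u. \<exists>t\<le>m. u \<in> S t}"

lemma before_V: "before vs s u \<Longrightarrow> s \<in> V \<and> u \<in> V"
  unfolding before_def using setvs by auto

lemma before_idx: "s \<in> V \<Longrightarrow> u \<in> V \<Longrightarrow> before vs s u \<longleftrightarrow> idx s < idx u"
proof -
  assume a: "s \<in> V" "u \<in> V"
  have "before vs (vs ! idx s) (vs ! idx u) \<longleftrightarrow> idx s < idx u"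
    using before_nth[OF idx_props[OF a(1), THEN conjunct1] idx_props[OF a(2), THEN conjunct1]] .
  then show ?thesis using idx_props a by simp
qed

lemma Q_V: "Q u \<subseteq> V" unfolding Q_def using before_V by blast

lemma phi_nonneg: "u \<in> V \<Longrightarrow> phi u \<ge> 0"
  unfolding phi_def using Q_V by (intro marg_nonneg) auto

lemma nu_le_phi: assumes "u \<in> S t" "t \<le> n" shows "incr_value vs f (S t) u \<le> phi u"
  unfolding incr_value_def phi_def
proof (rule marg_anti)
  show "Q u \<subseteq> {s \<in> S t. before vs s u}" using assms unfolding Q_def by auto
  show "{s \<in> S t. before vs s u} \<union> {u} \<subseteq> V" using assms S_V by auto
qed

lemma phi_le_nu: assumes "u \<in> S t" "t \<le> n" "\<forall>t'. t < t' \<and> t' \<le> n \<longrightarrow> u \<notin> S t'"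
  shows "phi u \<le> incr_value vs f (S t) u"
  unfolding incr_value_def phi_def
proof (rule marg_anti)
  show "{s \<in> S t. before vs s u} \<subseteq> Q u"
  proof
    fix s assume s: "s \<in> {s \<in> S t. before vs s u}"
    have "s \<in> S t'" if "t' \<le> n" "u \<in> S t'" for t'
    proof -
      have "t' \<le> t" using assms that by (meson not_le)
      have "idx s < idx u" using s before_idx[of s u] before_V[of s u] by auto
      moreover have "idx u < t'" using S_idx[of u t'] that by auto
      ultimately show ?thesis using persist[of s t t'] s \<open>t' \<le> t\<close> assms by auto
    qed
    then show "s \<in> Q u" using s unfolding Q_def by auto
  qed
  show "Q u \<union> {u} \<subseteq> V" using Q_V[of u] assms(1) S_V[of t] by blast
qed

lemma gain: assumes m: "m < n"
  shows "f (S m) + \<beta> * (\<Sum>u\<in>S m - S (Suc m). phi u) \<le> f (S (Suc m))"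
proof -
  let ?v = "vs ! m"
  let ?C = "nbr E ?v \<inter> S m"
  show ?thesis
  proof (cases "marginal f (S m) ?v \<ge> (1 + \<beta>) * (\<Sum>u\<in>?C. incr_value vs f (S m) u)")
    case False
    then have "S (Suc m) = S m" using S_Suc[OF m] by (simp add: pg_step_def Let_def)
    then show ?thesis by simp
  next
    case True
    then have SS: "S (Suc m) = (S m - ?C) \<union> {?v}" using S_Suc[OF m] by (simp add: pg_step_def Let_def)
    have vnot: "?v \<notin> S m" using S_idx[of ?v m] idx_nth[OF m] by auto
    have vV: "?v \<in> V" using m setvs nth_mem by blast
    have diff: "S m - S (Suc m) = ?C" using SS vnot by auto
    have phile: "phi u \<le> incr_value vs f (S m) u" if u: "u \<in> ?C" for u
    proof (rule phi_le_nu)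
      show "u \<in> S m" "m \<le> n" using u m by auto
      show "\<forall>t'. m < t' \<and> t' \<le> n \<longrightarrow> u \<notin> S t'"
      proof (intro allI impI notI)
        fix t' assume t': "m < t' \<and> t' \<le> n" "u \<in> S t'"
        have "idx u < Suc m" using S_idx[of u m] u by auto
        then have "u \<in> S (Suc m)" using persist[of u t' "Suc m"] t' by auto
        then show False using diff u by auto
      qed
    qed
    have a: "marginal f (S m) ?v \<le> marginal f (S m - ?C) ?v"
      using S_V vV by (intro marg_anti) auto
    have b: "f (S m) - f (S m - ?C) \<le> (\<Sum>u\<in>?C. incr_value vs f (S m) u)"
      using S_V by (intro remove_bound) auto
    have c: "(\<Sum>u\<in>?C. phi u) \<le> (\<Sum>u\<in>?C. incr_value vs f (S m) u)"
      using phile by (intro sum_mono) auto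
    have "f (S (Suc m)) = f (S m - ?C) + marginal f (S m - ?C) ?v"
      unfolding SS marginal_def by simp
    have d: "\<beta> * (\<Sum>u\<in>?C. phi u) \<le> \<beta> * (\<Sum>u\<in>?C. incr_value vs f (S m) u)"
      using c bpos by simp
    have e: "(1 + \<beta>) * (\<Sum>u\<in>?C. incr_value vs f (S m) u) = (\<Sum>u\<in>?C. incr_value vs f (S m) u) + \<beta> * (\<Sum>u\<in>?C. incr_value vs f (S m) u)"
      by (simp add: algebra_simps)
    show ?thesis unfolding diff \<open>f (S (Suc m)) = _\<close> using a b True d e by linarith
  qed
qed

lemma Am_take: "Am m \<subseteq> set (take m vs)"
proof
  fix u assume "u \<in> Am m"
  then obtain t where "t \<le> m" "u \<in> S t" unfolding Am_def by auto
  then show "u \<in> set (take m vs)" using S_sub_take[of t] set_take_subset_set_take[of t m vs] by blast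
qed

lemma amort: "m \<le> n \<Longrightarrow> \<beta> * (\<Sum>u\<in>Am m - S m. phi u) \<le> f (S m)"
proof (induction m)
  case 0
  have "Am 0 = {}" unfolding Am_def using S0 by auto
  then show ?case using S0 f0 by simp
next
  case (Suc m)
  then have m: "m < n" by simp
  have vnot: "vs ! m \<notin> Am m" using Am_take[of m] in_take[OF m, of m] by auto
  have AmS: "Am (Suc m) = Am m \<union> S (Suc m)" unfolding Am_def by (auto simp: le_Suc_eq)
  have SmA: "S m \<subseteq> Am m" unfolding Am_def by auto
  have eq: "Am (Suc m) - S (Suc m) = (Am m - S m) \<union> (S m - S (Suc m))"
    using AmS SmA S_Suc_sub[OF m] vnot by auto
  have finA: "finite (Am m)" using Am_take finite_subset by blast
  have "(\<Sum>u\<in>Am (Suc m) - S (Suc m). phi u) = (\<Sum>u\<in>Am m - S m. phi u) + (\<Sum>u\<in>S m - S (Suc m). phi u)"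
    unfolding eq by (rule sum.union_disjoint) (use finA finS in auto)
  then show ?case using Suc gain[OF m] by (simp add: distrib_left)
qed

end


context PG
begin

lemma Am_V: "Am m \<subseteq> V" unfolding Am_def using S_V by blast
lemma finAm: "finite (Am m)" using Am_V finV finite_subset by blast
lemma S_Am: "t \<le> m \<Longrightarrow> S t \<subseteq> Am m" unfolding Am_def by blast

lemma sumphi: "(\<Sum>u\<in>Am n. phi u) \<le> (1 + 1 / \<beta>) * f (S n)"
proof -
  have sub: "S n \<subseteq> Am n" using S_Am by simp
  have "(\<Sum>u\<in>Am n. phi u) = (\<Sum>u\<in>Am n - S n. phi u) + (\<Sum>u\<in>S n. phi u)"
    using sum.subset_diff[OF sub finAm] by simp
  moreover have "(\<Sum>u\<in>S n. phi u) \<le> (\<Sum>u\<in>S n. incr_value vs f (S n) u)"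
    by (rule sum_mono, rule phi_le_nu) auto
  moreover have "(\<Sum>u\<in>S n. incr_value vs f (S n) u) = f (S n)"
    using tele[OF S_V] by simp
  moreover have "\<beta> * (\<Sum>u\<in>Am n - S n. phi u) \<le> f (S n)" using amort by simp
  then have "(\<Sum>u\<in>Am n - S n. phi u) \<le> f (S n) / \<beta>" using bpos by (simp add: field_simps)
  ultimately have "(\<Sum>u\<in>Am n. phi u) \<le> f (S n) / \<beta> + f (S n)" by linarith
  then show ?thesis by (simp add: algebra_simps)
qed

lemma fA: "f (Am n) \<le> (\<Sum>u\<in>Am n. phi u)"
proof -
  have "f (Am n) = (\<Sum>u\<in>Am n. incr_value vs f (Am n) u)" using tele[OF Am_V] .
  also have "\<dots> \<le> (\<Sum>u\<in>Am n. phi u)"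
  proof (rule sum_mono)
    fix u assume u: "u \<in> Am n"
    then obtain t where t: "t \<le> n" "u \<in> S t" unfolding Am_def by auto
    show "incr_value vs f (Am n) u \<le> phi u"
      unfolding incr_value_def phi_def
    proof (rule marg_anti)
      show "Q u \<subseteq> {s \<in> Am n. before vs s u}"
        using t S_Am[of t n] unfolding Q_def by blast
      show "{s \<in> Am n. before vs s u} \<union> {u} \<subseteq> V" using Am_V u by blast
    qed
  qed
  finally show ?thesis .
qed

lemma reject: assumes x: "x \<in> V" "x \<notin> Am n"
  shows "marginal f (Am n) x \<le> (1 + \<beta>) * (\<Sum>u\<in>nbr E x \<inter> S (idx x). phi u)"
proof -
  let ?i = "idx x"
  have i: "?i < n" "vs ! ?i = x" using idx_props[OF x(1)] by auto
  let ?C = "nbr E x \<inter> S ?i"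
  have nc: "\<not> (marginal f (S ?i) x \<ge> (1 + \<beta>) * (\<Sum>u\<in>?C. incr_value vs f (S ?i) u))"
  proof
    assume c: "marginal f (S ?i) x \<ge> (1 + \<beta>) * (\<Sum>u\<in>?C. incr_value vs f (S ?i) u)"
    have "S (Suc ?i) = (S ?i - ?C) \<union> {x}" using S_Suc[OF i(1)] i(2) c
      by (simp add: pg_step_def Let_def)
    then have "x \<in> Am n" using S_Am[of "Suc ?i" n] i(1) by auto
    then show False using x by simp
  qed
  have a: "marginal f (Am n) x \<le> marginal f (S ?i) x"
    using S_Am[of ?i n] i(1) Am_V x(1) by (intro marg_anti) auto
  have b: "(\<Sum>u\<in>?C. incr_value vs f (S ?i) u) \<le> (\<Sum>u\<in>?C. phi u)"
    by (rule sum_mono, rule nu_le_phi) (use i(1) in auto)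
  have "(1 + \<beta>) * (\<Sum>u\<in>?C. incr_value vs f (S ?i) u) \<le> (1 + \<beta>) * (\<Sum>u\<in>?C. phi u)"
    using b bpos by (intro mult_left_mono) auto
  then show ?thesis using a nc by linarith
qed

lemma in_drop: "i \<le> j \<Longrightarrow> j < n \<Longrightarrow> vs ! j \<in> set (drop i vs)"
proof -
  assume a: "i \<le> j" "j < n"
  have "drop i vs ! (j - i) = vs ! j" using a by simp
  moreover have "j - i < length (drop i vs)" using a by simp
  ultimately show ?thesis by (metis nth_mem)
qed

lemma count: assumes T: "independent_set V E T"
  shows "(\<Sum>x\<in>T - Am n. \<Sum>u\<in>nbr E x \<inter> S (idx x). phi u) \<le> real k * (\<Sum>u\<in>Am n. phi u)"
proof -
  let ?T = "T - Am n"
  let ?R = "\<lambda>x u. u \<in> nbr E x \<inter> S (idx x)"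
  have TV: "T \<subseteq> V" and Tind: "independent E T" using T by (auto simp: independent_set_def)
  have finT: "finite ?T" using TV finV finite_subset by blast
  have "(\<Sum>x\<in>?T. \<Sum>u\<in>nbr E x \<inter> S (idx x). phi u) = (\<Sum>x\<in>?T. \<Sum>u\<in>{u. u \<in> Am n \<and> ?R x u}. phi u)"
  proof (rule sum.cong)
    fix x assume "x \<in> ?T"
    then have "idx x < n" using idx_props TV by blast
    then have "S (idx x) \<subseteq> Am n" using S_Am by simp
    then have "nbr E x \<inter> S (idx x) = {u. u \<in> Am n \<and> ?R x u}" by blast
    then show "(\<Sum>u\<in>nbr E x \<inter> S (idx x). phi u) = (\<Sum>u\<in>{u. u \<in> Am n \<and> ?R x u}. phi u)" by simp
  qed simp
  also have "\<dots> = (\<Sum>u\<in>Am n. \<Sum>x\<in>{x. x \<in> ?T \<and> ?R x u}. phi u)"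
    by (rule sum.swap_restrict[OF finT finAm])
  also have "\<dots> = (\<Sum>u\<in>Am n. real (card {x. x \<in> ?T \<and> ?R x u}) * phi u)" by simp
  also have "\<dots> \<le> (\<Sum>u\<in>Am n. real k * phi u)"
  proof (rule sum_mono)
    fix u assume u: "u \<in> Am n"
    then have uV: "u \<in> V" using Am_V by blast
    let ?i = "idx u"
    have i: "?i < n" "vs ! ?i = u" using idx_props[OF uV] by auto
    let ?I = "{x. x \<in> ?T \<and> ?R x u}"
    have "?I \<subseteq> nbr E (vs ! ?i) \<inter> set (drop ?i vs)"
    proof
      fix x assume x: "x \<in> ?I"
      then have xV: "x \<in> V" using TV by blast
      have Exu: "E x u" "u \<noteq> x" using x by (auto simp: nbr_def)
      have "E u x" using Exu graph by (auto simp: simple_graph_def)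
      moreover have "idx u < idx x" using x S_idx by blast
      moreover have "idx x < n" "vs ! idx x = x" using idx_props[OF xV] by auto
      ultimately show "x \<in> nbr E (vs ! ?i) \<inter> set (drop ?i vs)"
        using i Exu in_drop[of ?i "idx x"] by (auto simp: nbr_def)
    qed
    moreover have "independent E ?I" using Tind by (auto simp: independent_def)
    ultimately have "card ?I \<le> k" using ord i(1) unfolding k_independence_ordering_def by blast
    then show "real (card ?I) * phi u \<le> real k * phi u"
      using phi_nonneg[OF uV] by (intro mult_right_mono) auto
  qed
  also have "\<dots> = real k * (\<Sum>u\<in>Am n. phi u)" by (simp add: sum_distrib_left)
  finally show ?thesis .
qed

lemma indep_S: "independent E (S t)"
proof (induction t)
  case 0 then show ?case by (simp add: S0 independent_def)
next
  case (Suc t)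
  show ?case
  proof (cases "t < n")
    case False
    then have "S (Suc t) = S t" by (simp add: S_def)
    then show ?thesis using Suc by simp
  next
    case True
    let ?v = "vs ! t"
    let ?C = "nbr E ?v \<inter> S t"
    have vnot: "?v \<notin> S t" using S_idx[of ?v t] idx_nth[OF True] by auto
    have sym: "\<And>a b. E a b \<Longrightarrow> E b a" and irr: "\<And>a. \<not> E a a"
      using graph by (auto simp: simple_graph_def)
    have "S (Suc t) = S t \<or> S (Suc t) = (S t - ?C) \<union> {?v}"
      using S_Suc[OF True] by (simp add: pg_step_def Let_def)
    then show ?thesis
    proof
      assume "S (Suc t) = S t" then show ?thesis using Suc by simp
    next
      assume eq: "S (Suc t) = (S t - ?C) \<union> {?v}"
      show ?thesis unfolding independent_def eq
      proof (intro ballI notI)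
        fix x y assume x: "x \<in> S t - ?C \<union> {?v}" and y: "y \<in> S t - ?C \<union> {?v}" and e: "E x y"
        show False
        proof (cases "x = ?v")
          case True
          then show False using y e vnot irr by (auto simp: nbr_def)
        next
          case False
          then have "x \<in> S t - ?C" using x by auto
          then show False using y e vnot sym Suc.IH False by (auto simp: nbr_def independent_def)
        qed
      qed
    qed
  qed
qed

lemma main:
  shows "independent_set V E (preemptive_greedy vs E f \<beta>) \<and>
         (\<forall>T. independent_set V E T \<longrightarrow>
            f T \<le> (real k * (1 + \<beta>) + 1) * (1 + 1 / \<beta>) * f (preemptive_greedy vs E f \<beta>))"
proof
  show "independent_set V E (preemptive_greedy vs E f \<beta>)"
    using indep_S[of n] S_V[of n] Sn by (simp add: independent_set_def)
next
  show "\<forall>T. independent_set V E T \<longrightarrow>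
            f T \<le> (real k * (1 + \<beta>) + 1) * (1 + 1 / \<beta>) * f (preemptive_greedy vs E f \<beta>)"
  proof (intro allI impI)
    fix T assume T: "independent_set V E T"
    have TV: "T \<subseteq> V" using T by (simp add: independent_set_def)
    let ?A = "Am n"
    let ?P = "\<Sum>u\<in>?A. phi u"
    have finT: "finite (T - ?A)" using TV finV finite_subset by blast
    have "f T \<le> f (?A \<union> (T - ?A))" using TV Am_V by (intro fmono) auto
    also have "\<dots> \<le> f ?A + (\<Sum>x\<in>T - ?A. marginal f ?A x)"
      using finT TV Am_V by (intro union_bound) auto
    also have "(\<Sum>x\<in>T - ?A. marginal f ?A x) \<le> (\<Sum>x\<in>T - ?A. (1 + \<beta>) * (\<Sum>u\<in>nbr E x \<inter> S (idx x). phi u))"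
      using TV by (intro sum_mono reject) auto
    also have "\<dots> = (1 + \<beta>) * (\<Sum>x\<in>T - ?A. \<Sum>u\<in>nbr E x \<inter> S (idx x). phi u)"
      by (simp add: sum_distrib_left)
    also have "\<dots> \<le> (1 + \<beta>) * (real k * ?P)"
      using count[OF T] bpos by (intro mult_left_mono) auto
    finally have a: "f T \<le> f ?A + (1 + \<beta>) * (real k * ?P)" by simp
    have b: "f T \<le> (real k * (1 + \<beta>) + 1) * ?P"
      using a fA by (simp add: algebra_simps)
    have "?P \<le> (1 + 1 / \<beta>) * f (S n)" by (rule sumphi)
    then have "(real k * (1 + \<beta>) + 1) * ?P \<le> (real k * (1 + \<beta>) + 1) * ((1 + 1 / \<beta>) * f (S n))"
      using bpos by (intro mult_left_mono) auto
    then show "f T \<le> (real k * (1 + \<beta>) + 1) * (1 + 1 / \<beta>) * f (preemptive_greedy vs E f \<beta>)"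
      using b Sn by (simp add: mult.assoc)
  qed
qed

end

theorem theorem6:
  fixes V :: "'a set" and E :: "'a \<Rightarrow> 'a \<Rightarrow> bool" and vs :: "'a list"
    and f :: "'a set \<Rightarrow> real" and k :: nat and \<beta> :: real
  assumes "k \<ge> 1"
    and "simple_graph V E"
    and "k_independence_ordering k V E vs"
    and "monotone_submodular V f"
    and "f {} = 0"
    and "\<beta> > 0"
  shows "independent_set V E (preemptive_greedy vs E f \<beta>) \<and>
         (\<forall>T. independent_set V E T \<longrightarrow>
            f T \<le> (real k * (1 + \<beta>) + 1) * (1 + 1 / \<beta>) * f (preemptive_greedy vs E f \<beta>))"
proof -
  interpret PG V E vs f k \<beta> using assms by unfold_locales auto
  show ?thesis by (rule main)
qed

end
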